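(* For every countably infinite graph $G$ the following are equivalent: (i) for every nontrivial ideal $\mathcal{I}$ on $\mathbb{N}$, $G$ is $\mathcal{I}^+$-Ramsey; (ii) in the Rado coloring of $K_\mathbb{N}$ there is a monochromatic copy of $G$ whose vertex set belongs to $\mathrm{nwd}^+$; (iii) $G$ is finitely ruled, i.e. there is a finite set $S\subseteq V(G)$ such that $G-S$ has no finite dominating set.
   Context: $\mathbb{N}=\{1,2,\dots\}$ and $K_\mathbb{N}$ is the complete graph on $\mathbb{N}$; a copy of $G$ is a subgraph isomorphic to $G$, monochromatic if all its edges have the same color. An ideal on $\mathbb{N}$ is a family $\mathcal{I}$ of subsets closed under subsets and finite unions; it is nontrivial if $\mathbb{N}\notin\mathcal{I}$ and $\mathcal{I}$ contains all finite subsets of $\mathbb{N}$. $\mathcal{I}^+=\mathcal{P}(\mathbb{N})\setminus\mathcal{I}$. $G$ is $\mathcal{I}^+$-Ramsey if for every finite coloring of the edges of $K_\mathbb{N}$ there is a monochromatic copy of $G$ whose vertex set lies in $\mathcal{I}^+$. The Rado coloring $\rho$ assigns to the edge $\{s,t\}$ with $s<t$ the $s$-th bit (counting from the least significant bit, which is the 1st) of the binary expansion of $t$. The truncated binary expansion of $n$ is its binary expansion with the leading 1 removed. For $s,t\in\mathbb{N}$, $t$ extends $s$ if $s\le t$ and the truncated binary expansion of $s$ is a terminal (least-significant) segment of the truncated binary expansion of $t$; $\langle s\rangle$ is the set of $t$ extending $s$. $\mathrm{nwd}$ is the ideal of all $A\subseteq\mathbb{N}$ such that for every $s\in\mathbb{N}$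 there is $t$ extending $s$ with $A\cap\langle t\rangle=\emptyset$, and $\mathrm{nwd}^+=\mathcal{P}(\mathbb{N})\setminus\mathrm{nwd}$. A set $X\subseteq V(G)$ is dominating if every vertex outside $X$ has a neighbor in $X$. *)

theory Defs
  imports Main "HOL-Library.Countable_Set" "HOL-Library.Sublist"
begin

definition Npos :: "nat set" where "Npos = {n. 1 \<le> n}"

definition is_graph :: "'a set \<Rightarrow> ('a \<Rightarrow> 'a \<Rightarrow> bool) \<Rightarrow> bool" where
  "is_graph V E \<longleftrightarrow> (\<forall>u v. E u v \<longrightarrow> u \<in> V \<and> v \<in> V \<and> u \<noteq> v \<and> E v u)"

definition nontrivial_ideal :: "nat set set \<Rightarrow> bool" where
  "nontrivial_ideal I \<longleftrightarrow>
     (\<forall>A\<in>I. A \<subseteq> Npos) \<and>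
     (\<forall>A\<in>I. \<forall>B. B \<subseteq> A \<longrightarrow> B \<in> I) \<and>
     (\<forall>A\<in>I. \<forall>B\<in>I. A \<union> B \<in> I) \<and>
     Npos \<notin> I \<and>
     (\<forall>A. finite A \<and> A \<subseteq> Npos \<longrightarrow> A \<in> I)"

definition positive_sets :: "nat set set \<Rightarrow> nat set set" where
  "positive_sets I = Pow Npos - I"

text \<open>An edge colouring of K_N: the colour of the edge {s,t} with s<t is c s t.
  It is finite if only finitely many colours are used.\<close>
definition finite_coloring :: "(nat \<Rightarrow> nat \<Rightarrow> 'c) \<Rightarrow> bool" where
  "finite_coloring c \<longleftrightarrow> finite {c s t | s t. 1 \<le> s \<and> s < t}"

definition edge_color :: "(nat \<Rightarrow> nat \<Rightarrow> 'c) \<Rightarrow> nat \<Rightarrow> nat \<Rightarrow> 'c" where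
  "edge_color c s t = c (min s t) (max s t)"

definition mono_copy_on :: "'a set \<Rightarrow> ('a \<Rightarrow> 'a \<Rightarrow> bool) \<Rightarrow> (nat \<Rightarrow> nat \<Rightarrow> 'c) \<Rightarrow> nat set \<Rightarrow> bool" where
  "mono_copy_on V E c X \<longleftrightarrow>
     (\<exists>f col. inj_on f V \<and> f ` V \<subseteq> Npos \<and> X = f ` V \<and>
        (\<forall>u\<in>V. \<forall>v\<in>V. E u v \<longrightarrow> edge_color c (f u) (f v) = col))"

definition ideal_plus_Ramsey :: "'a set \<Rightarrow> ('a \<Rightarrow> 'a \<Rightarrow> bool) \<Rightarrow> nat set set \<Rightarrow> bool" where
  "ideal_plus_Ramsey V E I \<longleftrightarrow>
     (\<forall>c :: nat \<Rightarrow> nat \<Rightarrow> nat. finite_coloring c \<longrightarrow>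
        (\<exists>X. X \<in> positive_sets I \<and> mono_copy_on V E c X))"

text \<open>Rado colouring: the s-th bit (LSB is the 1st) of t.\<close>
definition rado :: "nat \<Rightarrow> nat \<Rightarrow> nat" where
  "rado s t = (t div 2 ^ (s - 1)) mod 2"

fun bin :: "nat \<Rightarrow> bool list" where
  "bin n = (if n = 0 then [] else odd n # bin (n div 2))"

declare bin.simps[simp del]

definition trunc_bin :: "nat \<Rightarrow> bool list" where
  "trunc_bin n = butlast (bin n)"

text \<open>t extends s: s \<le> t and trunc(s) is a least-significant (terminal) segment of trunc(t);
  with LSB-first lists this is the prefix relation.\<close>
definition extends :: "nat \<Rightarrow> nat \<Rightarrow> bool" where
  "extends t s \<longleftrightarrow> s \<le> t \<and> prefix (trunc_bin s) (trunc_bin t)"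

definition cone :: "nat \<Rightarrow> nat set" where
  "cone s = {t \<in> Npos. extends t s}"

definition nwd :: "nat set set" where
  "nwd = {A. A \<subseteq> Npos \<and> (\<forall>s\<in>Npos. \<exists>t\<in>Npos. extends t s \<and> A \<inter> cone t = {})}"

definition nwd_plus :: "nat set set" where
  "nwd_plus = Pow Npos - nwd"

definition dominating :: "'a set \<Rightarrow> ('a \<Rightarrow> 'a \<Rightarrow> bool) \<Rightarrow> 'a set \<Rightarrow> bool" where
  "dominating W E D \<longleftrightarrow> D \<subseteq> W \<and> (\<forall>v\<in>W - D. \<exists>d\<in>D. E v d)"

definition finitely_ruled :: "'a set \<Rightarrow> ('a \<Rightarrow> 'a \<Rightarrow> bool) \<Rightarrow> bool" where
  "finitely_ruled V E \<longleftrightarrow>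
     (\<exists>S. finite S \<and> S \<subseteq> V \<and> \<not> (\<exists>D. finite D \<and> dominating (V - S) E D))"

end

theory Submission
  imports Defs
begin

lemma bin0[simp]: "bin 0 = []" by (subst bin.simps) simp
lemma bin1[simp]: "bin (Suc 0) = [True]" by (subst bin.simps) simp

lemma bin_nth: "k < length (bin n) \<Longrightarrow> bin n ! k = odd (n div 2^k)"
proof (induction n arbitrary: k rule: bin.induct)
  case (1 n)
  show ?case
  proof (cases "n = 0")
    case True then show ?thesis using 1 by simp
  next
    case False
    then have b: "bin n = odd n # bin (n div 2)" by (subst bin.simps) simp
    show ?thesis
    proof (cases k)
      case 0 then show ?thesis using b by simp
    next
      case (Suc j)
      then have "j < length (bin (n div 2))" using 1(2) b by simp
      then have "bin (n div 2) ! j = odd (n div 2 div 2^j)" using 1(1) False by blast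
      then show ?thesis using b Suc by (simp add: div_mult2_eq)
    qed
  qed
qed

lemma bin_less: "n < 2 ^ length (bin n)"
proof (induction n rule: bin.induct)
  case (1 n)
  show ?case
  proof (cases "n = 0")
    case True then show ?thesis by simp
  next
    case False
    then have b: "bin n = odd n # bin (n div 2)" by (subst bin.simps) simp
    have "n div 2 < 2 ^ length (bin (n div 2))" using 1 False by blast
    then show ?thesis using b by simp
  qed
qed

lemma bin_nonempty: "n \<ge> 1 \<Longrightarrow> bin n \<noteq> []"
  by (subst bin.simps) simp

lemma lt_pow2: "(n::nat) < 2 ^ n"
proof (induction n)
  case 0 then show ?case by simp
next
  case (Suc n)
  have "(1::nat) \<le> 2 ^ n" by simp
  then show ?case using Suc.IH by (simp only: power_Suc)
qed

fun nob :: "bool list \<Rightarrow> nat" where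
  "nob [] = 0"
| "nob (b # bs) = of_bool b + 2 * nob bs"

lemma bin_nob: "bin (nob (bs @ [True])) = bs @ [True]"
proof (induction bs)
  case Nil then show ?case by (simp add: numeral_eq_Suc)
next
  case (Cons b bs)
  have pos: "nob (bs @ [True]) \<ge> 1"
  proof (rule ccontr)
    assume "\<not> ?thesis" then have "nob (bs @ [True]) = 0" by simp
    then have "bin (nob (bs @ [True])) = []" by simp
    then show False using Cons by simp
  qed
  have "bin (nob ((b # bs) @ [True])) = odd (of_bool b + 2 * nob (bs @ [True])) # bin ((of_bool b + 2 * nob (bs @ [True])) div 2)"
    using pos by (subst bin.simps) simp
  also have "\<dots> = b # bin (nob (bs @ [True]))" by simp
  finally show ?case using Cons by simp
qed

lemma trunc_nob: "trunc_bin (nob (bs @ [True])) = bs"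
  unfolding trunc_bin_def bin_nob by simp

lemma nob_ge: "nob (bs @ [True]) \<ge> 2 ^ length bs"
  by (induction bs) auto

lemma len_trunc: "n \<ge> 1 \<Longrightarrow> length (bin n) = Suc (length (trunc_bin n))"
  unfolding trunc_bin_def using bin_nonempty[of n] by simp

lemma trunc_nth: "n \<ge> 1 \<Longrightarrow> k < length (trunc_bin n) \<Longrightarrow> trunc_bin n ! k = odd (n div 2^k)"
proof -
  assume a: "n \<ge> 1" "k < length (trunc_bin n)"
  then have "k < length (bin n)" using len_trunc[of n] by simp
  then have "bin n ! k = odd (n div 2^k)" by (rule bin_nth)
  moreover have "trunc_bin n ! k = bin n ! k" using a(2) unfolding trunc_bin_def by (rule nth_butlast)
  ultimately show ?thesis by simp
qed

lemma less_pow_trunc: "n < 2 ^ Suc (length (trunc_bin n))"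
  using bin_less[of n] len_trunc[of n]
  by (cases "n = 0") auto

lemma prefix_nth: "prefix xs ys \<Longrightarrow> k < length xs \<Longrightarrow> ys ! k = xs ! k"
  by (auto elim!: prefixE simp: nth_append)

lemma ext_exists:
  assumes "s \<ge> 1" "w \<noteq> []"
  defines "t \<equiv> nob ((trunc_bin s @ w) @ [True])"
  shows "t \<in> Npos" "extends t s" "t \<ge> 2 ^ (length (trunc_bin s) + length w)"
    "trunc_bin t = trunc_bin s @ w"
proof -
  show tb: "trunc_bin t = trunc_bin s @ w" unfolding t_def by (rule trunc_nob)
  show ge: "t \<ge> 2 ^ (length (trunc_bin s) + length w)" unfolding t_def using nob_ge[of "trunc_bin s @ w"] by simp
  have "s < 2 ^ Suc (length (trunc_bin s))" by (rule less_pow_trunc)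
  also have "\<dots> \<le> 2 ^ (length (trunc_bin s) + length w)" using assms(2)
    by (intro power_increasing) (auto simp: Suc_le_eq)
  finally have "s < t" using ge by simp
  then show "extends t s" unfolding extends_def tb by simp
  show "t \<in> Npos" using \<open>s < t\<close> assms(1) unfolding Npos_def by simp
qed

lemma extends_refl: "extends s s" unfolding extends_def by simp

lemma extends_trans: "extends u t \<Longrightarrow> extends t s \<Longrightarrow> extends u s"
  unfolding extends_def by (auto simp: prefix_def)

lemma cone_mono: "extends t s \<Longrightarrow> cone t \<subseteq> cone s"
  unfolding cone_def using extends_trans by blast

lemma cone_ge: "u \<in> cone t \<Longrightarrow> t \<le> u"
  unfolding cone_def extends_def by simp

lemma self_in_cone: "t \<in> Npos \<Longrightarrow> t \<in> cone t"
  unfolding cone_def using extends_refl by simp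

lemma large_ext: "s \<in> Npos \<Longrightarrow> \<exists>t\<in>Npos. extends t s \<and> t > (m::nat)"
proof -
  assume s: "s \<in> Npos"
  let ?w = "replicate (Suc m) False"
  let ?t = "nob ((trunc_bin s @ ?w) @ [True])"
  have s1: "s \<ge> 1" using s unfolding Npos_def by simp
  note e = ext_exists[OF s1, of ?w]
  have "m < 2 ^ Suc m" by (induction m) auto
  also have "(2::nat) ^ Suc m \<le> 2 ^ (length (trunc_bin s) + length ?w)"
    by (intro power_increasing) auto
  finally have "m < ?t" using e(3) by simp
  then show ?thesis using e(1,2) by auto
qed

lemma nwd_ideal: "nontrivial_ideal nwd"
  unfolding nontrivial_ideal_def
proof (intro conjI ballI allI impI)
  fix A assume "A \<in> nwd" then show "A \<subseteq> Npos" unfolding nwd_def by simp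
next
  fix A B assume "A \<in> nwd" "B \<subseteq> A" then show "B \<in> nwd" unfolding nwd_def by blast
next
  fix A B assume A: "A \<in> nwd" and B: "B \<in> nwd"
  show "A \<union> B \<in> nwd" unfolding nwd_def
  proof (intro CollectI conjI ballI)
    show "A \<union> B \<subseteq> Npos" using A B unfolding nwd_def by auto
  next
    fix s assume s: "s \<in> Npos"
    then obtain t1 where t1: "t1 \<in> Npos" "extends t1 s" "A \<inter> cone t1 = {}" using A unfolding nwd_def by blast
    then obtain t2 where t2: "t2 \<in> Npos" "extends t2 t1" "B \<inter> cone t2 = {}" using B unfolding nwd_def by blast
    have "cone t2 \<subseteq> cone t1" using t2(2) by (rule cone_mono)
    then show "\<exists>t\<in>Npos. extends t s \<and> (A \<union> B) \<inter> cone t = {}"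
      using t1 t2 extends_trans by blast
  qed
next
  show "Npos \<notin> nwd"
  proof
    assume "Npos \<in> nwd"
    moreover have "(1::nat) \<in> Npos" unfolding Npos_def by simp
    ultimately obtain t where "t \<in> Npos" "Npos \<inter> cone t = {}" unfolding nwd_def by blast
    then show False using self_in_cone by blast
  qed
next
  fix A assume A: "finite A \<and> A \<subseteq> Npos"
  then obtain m where m: "\<forall>x\<in>A. x < m" using finite_nat_bounded[of A] by (auto simp: lessThan_def)
  show "A \<in> nwd" unfolding nwd_def
  proof (intro CollectI conjI ballI)
    show "A \<subseteq> Npos" using A by simp
  next
    fix s assume "s \<in> Npos"
    then obtain t where t: "t \<in> Npos" "extends t s" "t > m" using large_ext by blast
    have "A \<inter> cone t = {}"
    proof (rule ccontr)
      assume "A \<inter> cone t \<noteq> {}"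
      then obtain x where x: "x \<in> A" "x \<in> cone t" by blast
      have "x < m" using m x(1) by blast
      moreover have "t \<le> x" using x(2) by (rule cone_ge)
      ultimately show False using t(3) by simp
    qed
    then show "\<exists>t\<in>Npos. extends t s \<and> A \<inter> cone t = {}" using t by blast
  qed
qed

lemma rado_finite: "finite_coloring rado"
proof -
  have "{rado s t | s t. 1 \<le> s \<and> s < t} \<subseteq> {0,1}" unfolding rado_def by auto
  then show ?thesis unfolding finite_coloring_def using finite_subset by blast
qed

lemma i_ii:
  assumes "\<forall>I. nontrivial_ideal I \<longrightarrow> ideal_plus_Ramsey V E I"
  shows "\<exists>X. X \<in> nwd_plus \<and> mono_copy_on V E rado X"
  using assms nwd_ideal rado_finite
  unfolding ideal_plus_Ramsey_def positive_sets_def nwd_plus_def by blast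

lemma ii_iii:
  assumes X: "X \<in> nwd_plus" and mc: "mono_copy_on V E rado X"
  shows "finitely_ruled V E"
proof (rule ccontr)
  assume nfr: "\<not> finitely_ruled V E"
  obtain f col where f: "inj_on f V" "f ` V \<subseteq> Npos" "X = f ` V"
    and fc: "\<forall>u\<in>V. \<forall>v\<in>V. E u v \<longrightarrow> edge_color rado (f u) (f v) = col"
    using mc unfolding mono_copy_on_def by blast
  have "X \<in> nwd" unfolding nwd_def
  proof (intro CollectI conjI ballI)
    show "X \<subseteq> Npos" using f by simp
  next
    fix s assume s: "s \<in> Npos"
    then have s1: "s \<ge> 1" unfolding Npos_def by simp
    define L where "L = length (trunc_bin s)"
    define S where "S = {v\<in>V. f v \<le> L}"
    have "f ` S \<subseteq> {..L}" unfolding S_def by auto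
    then have "finite (f ` S)" using finite_subset by blast
    moreover have "inj_on f S" using f(1) unfolding S_def by (rule inj_on_subset) auto
    ultimately have finS: "finite S" using finite_image_iff by blast
    have "S \<subseteq> V" unfolding S_def by auto
    then obtain D where D: "finite D" "dominating (V - S) E D"
      using nfr finS unfolding finitely_ruled_def by blast
    have DV: "D \<subseteq> V - S" using D(2) unfolding dominating_def by simp
    have "finite (f ` (S \<union> D))" using finS D(1) by simp
    then obtain m0 where m0: "\<forall>x\<in>f ` (S \<union> D). x < m0" using finite_nat_bounded[of "f ` (S \<union> D)"]
      by (auto simp: lessThan_def)
    define m where "m = Suc (m0 + L)"
    have m: "\<forall>x\<in>f ` (S \<union> D). x < m"
    proof
      fix x assume "x \<in> f ` (S \<union> D)"
      then have "x < m0" using m0 by blast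
      then show "x < m" unfolding m_def by simp
    qed
    define b where "b = (col \<noteq> 1)"
    define w where "w = map (\<lambda>j. if Suc (L + j) \<in> f ` D then b else False) [0..<m]"
    define t where "t = nob ((trunc_bin s @ w) @ [True])"
    have wne: "w \<noteq> []" unfolding w_def m_def by simp
    note e = ext_exists[OF s1 wne]
    have lw: "length w = m" unfolding w_def by simp
    have tN: "t \<in> Npos" and est: "extends t s" and tb: "trunc_bin t = trunc_bin s @ w"
      using e unfolding t_def by auto
    have "m < 2 ^ m" by (rule lt_pow2)
    also have "(2::nat) ^ m \<le> 2 ^ (L + m)" by (intro power_increasing) auto
    also have "\<dots> \<le> t" using e(3) unfolding t_def L_def lw by simp
    finally have mt: "m < t" .
    have "X \<inter> cone t = {}"
    proof (rule ccontr)
      assume "X \<inter> cone t \<noteq> {}"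
      then obtain v where v: "v \<in> V" "f v \<in> cone t" using f(3) by blast
      have tu: "t \<le> f v" using v(2) by (rule cone_ge)
      have eu: "extends (f v) t" and u1: "f v \<ge> 1" using v(2) unfolding cone_def Npos_def by auto
      have "v \<notin> S \<union> D"
      proof
        assume "v \<in> S \<union> D"
        then have "f v < m" using m by blast
        then show False using tu mt by simp
      qed
      then have "v \<in> (V - S) - D" using v(1) by blast
      then obtain d where d: "d \<in> D" "E v d" using D(2) unfolding dominating_def by blast
      have dV: "d \<in> V" "d \<notin> S" using d(1) DV by auto
      have fdL: "f d > L" using dV unfolding S_def by auto
      have fdm: "f d < m" using m d(1) by blast
      have "edge_color rado (f v) (f d) = col" using fc v(1) dV(1) d(2) by blast
      moreover have "min (f v) (f d) = f d" "max (f v) (f d) = f v" using fdm mt tu by auto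
      ultimately have rc: "(f v div 2 ^ (f d - 1)) mod 2 = col" unfolding edge_color_def rado_def by simp
      define j where "j = f d - 1 - L"
      have pj: "f d - 1 = L + j" unfolding j_def using fdL by simp
      have jm: "j < m" unfolding j_def using fdm by simp
      have plt: "L + j < length (trunc_bin t)" using tb jm lw unfolding L_def by simp
      have pre: "prefix (trunc_bin t) (trunc_bin (f v))" using eu unfolding extends_def by simp
      then have "length (trunc_bin t) \<le> length (trunc_bin (f v))" by (rule prefix_length_le)
      then have plt2: "L + j < length (trunc_bin (f v))" using plt by simp
      have "trunc_bin (f v) ! (L + j) = trunc_bin t ! (L + j)" using prefix_nth[OF pre plt] .
      also have "\<dots> = w ! j" unfolding tb L_def using jm lw by (simp add: nth_append)
      also have "\<dots> = b"
      proof -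
        have "Suc (L + j) = f d" using pj fdL by simp
        then have "Suc (L + j) \<in> f ` D" using d(1) by blast
        then show ?thesis unfolding w_def using jm by simp
      qed
      finally have "odd (f v div 2 ^ (L + j)) = b" using trunc_nth[OF u1 plt2] by simp
      then have "odd (f v div 2 ^ (f d - 1)) = b" using pj by simp
      then show False using rc unfolding b_def by (cases "col = 1") (auto simp: odd_iff_mod_2_eq_one)
    qed
    then show "\<exists>t\<in>Npos. extends t s \<and> X \<inter> cone t = {}" using tN est by blast
  qed
  then show False using X unfolding nwd_plus_def by simp
qed

lemma ni_p1: "nontrivial_ideal J \<Longrightarrow> \<forall>A\<in>J. A \<subseteq> Npos" unfolding nontrivial_ideal_def by (elim conjE) assumption
lemma ni_p2: "nontrivial_ideal J \<Longrightarrow> \<forall>A\<in>J. \<forall>B. B \<subseteq> A \<longrightarrow> B \<in> J" unfolding nontrivial_ideal_def by (elim conjE) assumption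
lemma ni_p3: "nontrivial_ideal J \<Longrightarrow> \<forall>A\<in>J. \<forall>B\<in>J. A \<union> B \<in> J" unfolding nontrivial_ideal_def by (elim conjE) assumption
lemma ni_Npos: "nontrivial_ideal J \<Longrightarrow> Npos \<notin> J" unfolding nontrivial_ideal_def by (elim conjE) assumption
lemma ni_p5: "nontrivial_ideal J \<Longrightarrow> \<forall>A. finite A \<and> A \<subseteq> Npos \<longrightarrow> A \<in> J" unfolding nontrivial_ideal_def by (elim conjE) assumption
lemma ni_sub: "nontrivial_ideal J \<Longrightarrow> A \<in> J \<Longrightarrow> A \<subseteq> Npos"
  using ni_p1 by (rule bspec)
lemma ni_down: "nontrivial_ideal J \<Longrightarrow> A \<in> J \<Longrightarrow> B \<subseteq> A \<Longrightarrow> B \<in> J"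
proof -
  assume "nontrivial_ideal J" "A \<in> J" "B \<subseteq> A"
  then show "B \<in> J" using ni_p2[of J] by (meson bspec spec mp)
qed
lemma ni_un: "nontrivial_ideal J \<Longrightarrow> A \<in> J \<Longrightarrow> B \<in> J \<Longrightarrow> A \<union> B \<in> J"
proof -
  assume "nontrivial_ideal J" "A \<in> J" "B \<in> J"
  then show "A \<union> B \<in> J" using ni_p3[of J] by (meson bspec)
qed
lemma ni_fin: "nontrivial_ideal J \<Longrightarrow> finite A \<Longrightarrow> A \<subseteq> Npos \<Longrightarrow> A \<in> J"
proof -
  assume "nontrivial_ideal J" "finite A" "A \<subseteq> Npos"
  then show "A \<in> J" using ni_p5[of J] by blast
qed

lemma max_ideal_exists:
  assumes I: "nontrivial_ideal I"
  shows "\<exists>J. nontrivial_ideal J \<and> I \<subseteq> J \<and> (\<forall>A. A \<subseteq> Npos \<longrightarrow> A \<in> J \<or> Npos - A \<in> J)"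
proof -
  let ?Z = "{J. nontrivial_ideal J \<and> I \<subseteq> J}"
  have "\<forall>C\<in>chains ?Z. \<exists>U\<in>?Z. \<forall>X\<in>C. X \<subseteq> U"
  proof
    fix C assume C: "C \<in> chains ?Z"
    show "\<exists>U\<in>?Z. \<forall>X\<in>C. X \<subseteq> U"
    proof (cases "C = {}")
      case True
      have IZ: "I \<in> ?Z" using I by simp
      show ?thesis
      proof (rule bexI[where x=I])
        show "\<forall>X\<in>C. X \<subseteq> I" using True by simp
      qed (rule IZ)
    next
      case False
      have CZ: "C \<subseteq> ?Z" using C unfolding chains_def by simp
      have ch: "\<forall>A\<in>C. \<forall>B\<in>C. A \<subseteq> B \<or> B \<subseteq> A"
        using C unfolding chains_def chain_subset_def by simp
      have CZ': "\<And>J. J \<in> C \<Longrightarrow> nontrivial_ideal J" using CZ by blast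
      have "nontrivial_ideal (\<Union>C)" unfolding nontrivial_ideal_def
      proof (intro conjI ballI allI impI)
        fix A assume "A \<in> \<Union>C" then show "A \<subseteq> Npos" using CZ' ni_sub by blast
      next
        fix A B assume "A \<in> \<Union>C" "B \<subseteq> A" then show "B \<in> \<Union>C" using CZ' ni_down by blast
      next
        fix A B assume a: "A \<in> \<Union>C" "B \<in> \<Union>C"
        then obtain J1 J2 where j: "J1 \<in> C" "J2 \<in> C" "A \<in> J1" "B \<in> J2" by blast
        show "A \<union> B \<in> \<Union>C"
        proof (cases "J1 \<subseteq> J2")
          case True
          then have "A \<in> J2" using j by blast
          then have "A \<union> B \<in> J2" using j CZ' ni_un by blast
          then show ?thesis using j by blast
        next
          case False
          then have "J2 \<subseteq> J1" using ch j by blast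
          then have "B \<in> J1" using j by blast
          then have "A \<union> B \<in> J1" using j CZ' ni_un by blast
          then show ?thesis using j by blast
        qed
      next
        show "Npos \<notin> \<Union>C" using CZ' ni_Npos by blast
      next
        fix A assume "finite A \<and> A \<subseteq> Npos"
        moreover obtain J0 where "J0 \<in> C" using False by blast
        ultimately show "A \<in> \<Union>C" using CZ' ni_fin by blast
      qed
      moreover have "I \<subseteq> \<Union>C" using CZ False by blast
      ultimately show ?thesis by blast
    qed
  qed
  from Zorn_Lemma2[OF this] obtain M where M: "M \<in> ?Z" "\<forall>X\<in>?Z. M \<subseteq> X \<longrightarrow> X = M" by blast
  have Mi: "nontrivial_ideal M" using M by blast
  have "\<forall>A. A \<subseteq> Npos \<longrightarrow> A \<in> M \<or> Npos - A \<in> M"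
  proof (intro allI impI)
    fix A assume AN: "A \<subseteq> Npos"
    show "A \<in> M \<or> Npos - A \<in> M"
    proof (rule ccontr)
      assume nA: "\<not> (A \<in> M \<or> Npos - A \<in> M)"
      let ?M = "{B. B \<subseteq> Npos \<and> (\<exists>C\<in>M. B \<subseteq> C \<union> A)}"
      have emp: "{} \<in> M" using Mi ni_fin by blast
      have niM: "nontrivial_ideal ?M" unfolding nontrivial_ideal_def
      proof (intro conjI ballI allI impI)
        fix B assume "B \<in> ?M" then show "B \<subseteq> Npos" by blast
      next
        fix B B' assume "B \<in> ?M" "B' \<subseteq> B" then show "B' \<in> ?M" by blast
      next
        fix B B' assume b: "B \<in> ?M" "B' \<in> ?M"
        then obtain C C' where c: "C \<in> M" "C' \<in> M" "B \<subseteq> C \<union> A" "B' \<subseteq> C' \<union> A" by blast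
        have "C \<union> C' \<in> M" using c Mi ni_un by blast
        moreover have "B \<union> B' \<subseteq> (C \<union> C') \<union> A" using c by blast
        ultimately show "B \<union> B' \<in> ?M" using b by blast
      next
        show "Npos \<notin> ?M"
        proof
          assume "Npos \<in> ?M"
          then obtain C where C: "C \<in> M" "Npos \<subseteq> C \<union> A" by blast
          then have "Npos - A \<subseteq> C" by blast
          then have "Npos - A \<in> M" using C(1) Mi ni_down by blast
          then show False using nA by blast
        qed
      next
        fix B assume "finite B \<and> B \<subseteq> Npos"
        then have "B \<in> M" using Mi ni_fin by blast
        then show "B \<in> ?M" using Mi ni_sub by blast
      qed
      have MM: "M \<subseteq> ?M" using Mi ni_sub by blast
      have IM: "I \<subseteq> M" using M(1) by simp
      have IMM: "I \<subseteq> ?M" using IM MM by (rule subset_trans)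
      have MZ: "?M \<in> ?Z"
        by (rule CollectI, rule conjI, rule niM, rule IMM)
      have "?M = M" using bspec[OF M(2) MZ] MM by (rule mp)
      moreover have "A \<in> ?M" using AN emp by blast
      ultimately show False using nA by blast
    qed
  qed
  then show ?thesis using M(1) by blast
qed

locale uf =
  fixes J :: "nat set set"
  assumes Jni: "nontrivial_ideal J"
    and Jmax: "\<forall>A. A \<subseteq> Npos \<longrightarrow> A \<in> J \<or> Npos - A \<in> J"
begin

definition pos :: "nat set \<Rightarrow> bool" where "pos X \<longleftrightarrow> X \<subseteq> Npos \<and> X \<notin> J"

lemma J_sub: "A \<in> J \<Longrightarrow> A \<subseteq> Npos" using Jni ni_sub by blast
lemma J_down: "A \<in> J \<Longrightarrow> B \<subseteq> A \<Longrightarrow> B \<in> J" using Jni ni_down by blast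
lemma J_un: "A \<in> J \<Longrightarrow> B \<in> J \<Longrightarrow> A \<union> B \<in> J" using Jni ni_un by blast
lemma J_Npos: "Npos \<notin> J" using Jni ni_Npos by blast
lemma J_fin: "finite A \<Longrightarrow> A \<subseteq> Npos \<Longrightarrow> A \<in> J" using Jni ni_fin by blast

lemma J_UN: "finite K \<Longrightarrow> (\<forall>k\<in>K. h k \<in> J) \<Longrightarrow> (\<Union>k\<in>K. h k) \<in> J"
proof (induction K rule: finite_induct)
  case empty then show ?case using J_fin by simp
next
  case (insert x F) then show ?case using J_un by simp
qed

lemma pos_Npos: "pos Npos" unfolding pos_def using J_Npos by simp

lemma pos_int: "pos A \<Longrightarrow> pos B \<Longrightarrow> pos (A \<inter> B)"
proof -
  assume a: "pos A" "pos B"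
  then have "Npos - A \<in> J" "Npos - B \<in> J" using Jmax unfolding pos_def by blast+
  then have u: "(Npos - A) \<union> (Npos - B) \<in> J" using J_un by blast
  show "pos (A \<inter> B)" unfolding pos_def
  proof
    show "A \<inter> B \<subseteq> Npos" using a unfolding pos_def by blast
    show "A \<inter> B \<notin> J"
    proof
      assume "A \<inter> B \<in> J"
      then have "((Npos - A) \<union> (Npos - B)) \<union> (A \<inter> B) \<in> J" using u J_un by blast
      moreover have "((Npos - A) \<union> (Npos - B)) \<union> (A \<inter> B) = Npos" using a unfolding pos_def by blast
      ultimately show False using J_Npos by simp
    qed
  qed
qed

lemma pos_super: "pos A \<Longrightarrow> A \<subseteq> B \<Longrightarrow> B \<subseteq> Npos \<Longrightarrow> pos B"
  unfolding pos_def using J_down by blast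

lemma pos_inf: "pos A \<Longrightarrow> infinite A"
  unfolding pos_def using J_fin by blast

lemma pos_diff_fin: "pos A \<Longrightarrow> finite F \<Longrightarrow> pos (A - F)"
proof -
  assume a: "pos A" "finite F"
  show "pos (A - F)" unfolding pos_def
  proof
    show "A - F \<subseteq> Npos" using a unfolding pos_def by blast
    show "A - F \<notin> J"
    proof
      assume "A - F \<in> J"
      moreover have "A \<inter> F \<in> J" using a J_fin unfolding pos_def by auto
      ultimately have "(A - F) \<union> (A \<inter> F) \<in> J" using J_un by blast
      moreover have "(A - F) \<union> (A \<inter> F) = A" by blast
      ultimately show False using a unfolding pos_def by simp
    qed
  qed
qed

lemma pos_nonempty: "pos A \<Longrightarrow> A \<noteq> {}"
  using pos_inf by auto

lemma pos_split:
  assumes "finite K" "pos A" "A \<subseteq> (\<Union>k\<in>K. h k)"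
  shows "\<exists>k\<in>K. pos (A \<inter> h k)"
proof (rule ccontr)
  assume "\<not> ?thesis"
  then have "\<forall>k\<in>K. A \<inter> h k \<in> J" using assms(2) unfolding pos_def by auto
  then have "(\<Union>k\<in>K. A \<inter> h k) \<in> J" by (rule J_UN[OF assms(1)])
  moreover have "(\<Union>k\<in>K. A \<inter> h k) = A" using assms(3) by blast
  ultimately show False using assms(2) unfolding pos_def by simp
qed

lemma pos_Inter:
  assumes "finite F" "pos B" "\<forall>x\<in>F. pos (h x)"
  shows "pos (B \<inter> (\<Inter>x\<in>F. h x))"
  using assms
proof (induction F rule: finite_induct)
  case empty then show ?case by simp
next
  case (insert x F)
  have "pos (B \<inter> (\<Inter>x\<in>F. h x))" using insert by blast
  then have "pos ((B \<inter> (\<Inter>x\<in>F. h x)) \<inter> h x)" using insert(5) pos_int by blast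
  moreover have "(B \<inter> (\<Inter>x\<in>F. h x)) \<inter> h x = B \<inter> (\<Inter>x\<in>insert x F. h x)" by blast
  ultimately show ?case by simp
qed

end

definition nb :: "(nat \<Rightarrow> nat \<Rightarrow> nat) \<Rightarrow> nat \<Rightarrow> nat \<Rightarrow> nat set" where
  "nb c i x = {y \<in> Npos. y \<noteq> x \<and> edge_color c x y = i}"

lemma edge_color_sym: "edge_color c x y = edge_color c y x"
  unfolding edge_color_def by (simp add: min.commute max.commute)

context uf
begin

lemma color_choice:
  assumes fc: "finite_coloring (c :: nat \<Rightarrow> nat \<Rightarrow> nat)"
  shows "\<exists>i A. pos A \<and> (\<forall>x\<in>A. pos (nb c i x))"
proof -
  define Col where "Col = {c s t | s t. 1 \<le> s \<and> s < t}"
  have fC: "finite Col" using fc unfolding finite_coloring_def Col_def by simp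
  have ex: "\<exists>k. k \<in> Col \<and> pos (nb c k x)" if x: "x \<in> Npos" for x
  proof -
    have cov: "Npos - {x} \<subseteq> (\<Union>k\<in>Col. nb c k x)"
    proof
      fix y assume y: "y \<in> Npos - {x}"
      have "1 \<le> min x y" "min x y < max x y" using x y unfolding Npos_def by auto
      then have "edge_color c x y \<in> Col" unfolding Col_def edge_color_def by blast
      moreover have "y \<in> nb c (edge_color c x y) x" using y unfolding nb_def by simp
      ultimately show "y \<in> (\<Union>k\<in>Col. nb c k x)" by blast
    qed
    have "pos (Npos - {x})" using pos_diff_fin[OF pos_Npos] by simp
    then obtain k where k: "k \<in> Col" "pos ((Npos - {x}) \<inter> nb c k x)"
      using pos_split[OF fC _ cov] by blast
    have "pos (nb c k x)" using pos_super[OF k(2)] unfolding nb_def by auto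
    then show ?thesis using k(1) by blast
  qed
  define chi where "chi x = (SOME k. k \<in> Col \<and> pos (nb c k x))" for x
  have chi: "chi x \<in> Col \<and> pos (nb c (chi x) x)" if "x \<in> Npos" for x
    unfolding chi_def using someI_ex[OF ex[OF that]] .
  have cov2: "Npos \<subseteq> (\<Union>k\<in>Col. {x\<in>Npos. chi x = k})" using chi by blast
  obtain i where i: "i \<in> Col" "pos (Npos \<inter> {x\<in>Npos. chi x = i})"
    using pos_split[OF fC pos_Npos cov2] by blast
  have "\<forall>x\<in>Npos \<inter> {x\<in>Npos. chi x = i}. pos (nb c i x)" using chi by auto
  then show ?thesis using i(2) by blast
qed

end

locale emb0 = uf +
  fixes V :: "'a set" and E :: "'a \<Rightarrow> 'a \<Rightarrow> bool" and c :: "nat \<Rightarrow> nat \<Rightarrow> nat" and i :: nat and A :: "nat set"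
  assumes gr: "is_graph V E" and posA: "pos A" and Anb: "\<forall>x\<in>A. pos (nb c i x)"
begin

definition good :: "('a \<Rightarrow> nat) \<Rightarrow> 'a set \<Rightarrow> bool" where
  "good g P \<longleftrightarrow> inj_on g P \<and> g ` P \<subseteq> A \<and> (\<forall>u\<in>P. \<forall>v\<in>P. E u v \<longrightarrow> edge_color c (g u) (g v) = i)"

lemma E_sym: "E u v \<Longrightarrow> E v u" using gr unfolding is_graph_def by blast
lemma E_irr: "E u v \<Longrightarrow> u \<noteq> v" using gr unfolding is_graph_def by blast
lemma E_V: "E u v \<Longrightarrow> u \<in> V \<and> v \<in> V" using gr unfolding is_graph_def by blast

lemma good_empty: "good g {}" unfolding good_def by simp

lemma add_vertex:
  assumes g: "good g P" and v: "v \<notin> P" and p: "p \<in> A" "p \<notin> g ` P"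
    and adj: "\<forall>u\<in>P. E u v \<longrightarrow> p \<in> nb c i (g u)"
  shows "good (g(v := p)) (insert v P)"
  unfolding good_def
proof (intro conjI ballI impI)
  have gi: "inj_on g P" using g unfolding good_def by simp
  show "inj_on (g(v := p)) (insert v P)"
  proof -
    have "inj_on (g(v := p)) P" using gi v by (simp add: inj_on_def)
    moreover have "(g(v := p)) v \<notin> (g(v := p)) ` (P - {v})" using p v by auto
    ultimately show ?thesis by simp
  qed
  show "(g(v := p)) ` insert v P \<subseteq> A" using g p v unfolding good_def by auto
  fix u w assume uw: "u \<in> insert v P" "w \<in> insert v P" "E u w"
  show "edge_color c ((g(v := p)) u) ((g(v := p)) w) = i"
  proof (cases "u = v")
    case True
    then have wv: "w \<noteq> v" using E_irr uw(3) by blast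
    then have wP: "w \<in> P" using uw by simp
    have "E w v" using E_sym uw(3) True by simp
    then have "p \<in> nb c i (g w)" using adj wP by blast
    then have "edge_color c (g w) p = i" unfolding nb_def by simp
    then show ?thesis using True wv by (simp add: edge_color_sym)
  next
    case False
    then have uP: "u \<in> P" using uw by simp
    show ?thesis
    proof (cases "w = v")
      case True
      then have "p \<in> nb c i (g u)" using adj uP uw(3) by blast
      then show ?thesis using True False unfolding nb_def by simp
    next
      case wF: False
      then have "w \<in> P" using uw by simp
      then show ?thesis using g uP uw(3) False wF unfolding good_def by simp
    qed
  qed
qed

lemma fresh_point:
  assumes g: "good g P" and fP: "finite P"
  shows "\<exists>p. p \<in> A \<and> p \<notin> g ` P \<and> (\<forall>u\<in>P. E u v \<longrightarrow> p \<in> nb c i (g u))"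
proof -
  let ?F = "{u \<in> P. E u v}"
  have fF: "finite ?F" using fP by simp
  have "\<forall>u\<in>?F. pos (nb c i (g u))" using g Anb unfolding good_def by blast
  then have "pos (A \<inter> (\<Inter>u\<in>?F. nb c i (g u)))" by (rule pos_Inter[OF fF posA])
  then have "pos (A \<inter> (\<Inter>u\<in>?F. nb c i (g u)) - g ` P)" using pos_diff_fin fP by blast
  then obtain p where "p \<in> A \<inter> (\<Inter>u\<in>?F. nb c i (g u)) - g ` P" using pos_nonempty by blast
  then show ?thesis by blast
qed

lemma init_emb: "finite F \<Longrightarrow> \<exists>g. good g F"
proof (induction F rule: finite_induct)
  case empty then show ?case using good_empty by blast
next
  case (insert v F)
  then obtain g where g: "good g F" by blast
  obtain p where "p \<in> A" "p \<notin> g ` F" "\<forall>u\<in>F. E u v \<longrightarrow> p \<in> nb c i (g u)"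
    using fresh_point[OF g insert(1)] by blast
  then show ?case using add_vertex[OF g insert(2)] by blast
qed

end

locale emb = emb0 +
  fixes S :: "'a set" and g0 :: "'a \<Rightarrow> nat" and vs :: "nat \<Rightarrow> 'a" and bs :: "nat \<Rightarrow> nat"
  assumes finS: "finite S" and SV: "S \<subseteq> V"
    and nodom: "\<not> (\<exists>D. finite D \<and> dominating (V - S) E D)"
    and g0: "good g0 S"
    and vs: "range vs = V"
    and bs: "range bs = A \<inter> (\<Inter>s\<in>S. nb c i (g0 s))"
begin

definition Inv :: "'a set \<Rightarrow> ('a \<Rightarrow> nat) \<Rightarrow> bool" where
  "Inv P g \<longleftrightarrow> good g P \<and> S \<subseteq> P \<and> P \<subseteq> V \<and> finite P \<and> (\<forall>s\<in>S. g s = g0 s)"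

lemma Inv0: "Inv S g0" unfolding Inv_def using g0 finS SV by simp

lemma L1:
  assumes I: "Inv P g" and v: "v \<in> V"
  shows "\<exists>P' g'. Inv P' g' \<and> P \<subseteq> P' \<and> (\<forall>x\<in>P. g' x = g x) \<and> v \<in> P'"
proof (cases "v \<in> P")
  case True then show ?thesis using I by blast
next
  case False
  have gg: "good g P" and fP: "finite P" using I unfolding Inv_def by auto
  obtain p where p: "p \<in> A" "p \<notin> g ` P" "\<forall>u\<in>P. E u v \<longrightarrow> p \<in> nb c i (g u)"
    using fresh_point[OF gg fP] by blast
  have "good (g(v := p)) (insert v P)" using add_vertex[OF gg False p] .
  moreover have "\<forall>s\<in>S. (g(v := p)) s = g0 s" using I False unfolding Inv_def by auto
  ultimately have "Inv (insert v P) (g(v := p))" using I v unfolding Inv_def by auto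
  moreover have "\<forall>x\<in>P. (g(v := p)) x = g x" using False by auto
  ultimately show ?thesis by blast
qed

lemma L2:
  assumes I: "Inv P g" and b: "b \<in> A \<inter> (\<Inter>s\<in>S. nb c i (g0 s))"
  shows "\<exists>P' g'. Inv P' g' \<and> P \<subseteq> P' \<and> (\<forall>x\<in>P. g' x = g x) \<and> b \<in> g' ` P'"
proof (cases "b \<in> g ` P")
  case True then show ?thesis using I by blast
next
  case False
  have gg: "good g P" and fP: "finite P" and SP: "S \<subseteq> P" and PV: "P \<subseteq> V" and gS: "\<forall>s\<in>S. g s = g0 s"
    using I unfolding Inv_def by auto
  have "\<not> dominating (V - S) E (P - S)" using nodom fP by blast
  moreover have "P - S \<subseteq> V - S" using PV by blast
  ultimately obtain v where v: "v \<in> (V - S) - (P - S)" "\<forall>d\<in>P - S. \<not> E v d"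
    unfolding dominating_def by blast
  have vP: "v \<notin> P" using v(1) by blast
  have adj: "\<forall>u\<in>P. E u v \<longrightarrow> b \<in> nb c i (g u)"
  proof (intro ballI impI)
    fix u assume u: "u \<in> P" "E u v"
    have "E v u" by (rule E_sym[OF u(2)])
    then have "u \<in> S" using v(2) u(1) by blast
    then show "b \<in> nb c i (g u)" using b gS by auto
  qed
  have "good (g(v := b)) (insert v P)" using add_vertex[OF gg vP _ False adj] b by blast
  moreover have "\<forall>s\<in>S. (g(v := b)) s = g0 s" using gS vP SP by auto
  ultimately have "Inv (insert v P) (g(v := b))" using I v unfolding Inv_def by auto
  moreover have "\<forall>x\<in>P. (g(v := b)) x = g x" using vP by auto
  moreover have "b \<in> (g(v := b)) ` (insert v P)" by simp
  ultimately show ?thesis by blast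
qed

lemma step:
  assumes I: "Inv P g" and v: "v \<in> V" and b: "b \<in> A \<inter> (\<Inter>s\<in>S. nb c i (g0 s))"
  shows "\<exists>P' g'. Inv P' g' \<and> P \<subseteq> P' \<and> (\<forall>x\<in>P. g' x = g x) \<and> v \<in> P' \<and> b \<in> g' ` P'"
proof -
  obtain P1 g1 where 1: "Inv P1 g1" "P \<subseteq> P1" "\<forall>x\<in>P. g1 x = g x" "v \<in> P1"
    using L1[OF I v] by blast
  obtain P2 g2 where 2: "Inv P2 g2" "P1 \<subseteq> P2" "\<forall>x\<in>P1. g2 x = g1 x" "b \<in> g2 ` P2"
    using L2[OF 1(1) b] by blast
  have a: "\<forall>x\<in>P. g2 x = g x"
  proof
    fix x assume "x \<in> P"
    then have "x \<in> P1" "g1 x = g x" using 1(2,3) by auto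
    then show "g2 x = g x" using 2(3) by simp
  qed
  have "P \<subseteq> P2" using 1(2) 2(2) by (rule subset_trans)
  moreover have "v \<in> P2" using 1(4) 2(2) by blast
  ultimately show ?thesis using 2(1) 2(4) a by blast
qed

definition R :: "nat \<Rightarrow> 'a set \<times> ('a \<Rightarrow> nat) \<Rightarrow> 'a set \<times> ('a \<Rightarrow> nat) \<Rightarrow> bool" where
  "R n q q' \<longleftrightarrow> Inv (fst q') (snd q') \<and> fst q \<subseteq> fst q' \<and> (\<forall>x\<in>fst q. snd q' x = snd q x)
     \<and> vs n \<in> fst q' \<and> bs n \<in> snd q' ` fst q'"

primrec st :: "nat \<Rightarrow> 'a set \<times> ('a \<Rightarrow> nat)" where
  "st 0 = (S, g0)"
| "st (Suc n) = (SOME q'. R n (st n) q')"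

lemma st_props: "Inv (fst (st n)) (snd (st n)) \<and> R n (st n) (st (Suc n))"
proof (induction n)
  case 0
  have I: "Inv (fst (st 0)) (snd (st 0))" using Inv0 by simp
  have "vs 0 \<in> V" using vs by blast
  moreover have "bs 0 \<in> A \<inter> (\<Inter>s\<in>S. nb c i (g0 s))" using bs by blast
  ultimately have "\<exists>q'. R 0 (st 0) q'" using step[OF I] unfolding R_def by fastforce
  then have "R 0 (st 0) (st (Suc 0))" by (simp add: someI_ex)
  then show ?case using I by simp
next
  case (Suc n)
  have I: "Inv (fst (st (Suc n))) (snd (st (Suc n)))" using Suc unfolding R_def by blast
  have "vs (Suc n) \<in> V" using vs by blast
  moreover have "bs (Suc n) \<in> A \<inter> (\<Inter>s\<in>S. nb c i (g0 s))" using bs by blast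
  ultimately have "\<exists>q'. R (Suc n) (st (Suc n)) q'" using step[OF I] unfolding R_def by fastforce
  then have "R (Suc n) (st (Suc n)) (st (Suc (Suc n)))"
    by (simp only: st.simps(2)) (rule someI_ex)
  then show ?case using I by simp
qed

lemma st_Inv: "Inv (fst (st n)) (snd (st n))" using st_props by blast
lemma st_R: "R n (st n) (st (Suc n))" using st_props by blast

lemma st_mono: "m \<le> n \<Longrightarrow> fst (st m) \<subseteq> fst (st n) \<and> (\<forall>x\<in>fst (st m). snd (st n) x = snd (st m) x)"
proof (induction n rule: dec_induct)
  case base then show ?case by simp
next
  case (step n)
  have "R n (st n) (st (Suc n))" by (rule st_R)
  then show ?case using step unfolding R_def by auto
qed

definition idx :: "'a \<Rightarrow> nat" where "idx v = Suc (SOME n. vs n = v)"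

lemma idx_in: "v \<in> V \<Longrightarrow> v \<in> fst (st (idx v))"
proof -
  assume "v \<in> V"
  then have "\<exists>n. vs n = v" using vs by blast
  then have "vs (SOME n. vs n = v) = v" by (rule someI_ex)
  moreover have "R (SOME n. vs n = v) (st (SOME n. vs n = v)) (st (idx v))" unfolding idx_def by (rule st_R)
  ultimately show ?thesis unfolding R_def by simp
qed

definition fe :: "'a \<Rightarrow> nat" where "fe v = snd (st (idx v)) v"

lemma fe_eq: "v \<in> V \<Longrightarrow> idx v \<le> N \<Longrightarrow> fe v = snd (st N) v \<and> v \<in> fst (st N)"
  using st_mono[of "idx v" N] idx_in[of v] unfolding fe_def by auto

lemma embedding:
  "inj_on fe V \<and> fe ` V \<subseteq> A \<and> A \<inter> (\<Inter>s\<in>S. nb c i (g0 s)) \<subseteq> fe ` V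
   \<and> (\<forall>u\<in>V. \<forall>v\<in>V. E u v \<longrightarrow> edge_color c (fe u) (fe v) = i)"
proof (intro conjI)
  show "inj_on fe V"
  proof (rule inj_onI)
    fix u v assume uv: "u \<in> V" "v \<in> V" "fe u = fe v"
    let ?N = "max (idx u) (idx v)"
    have u: "fe u = snd (st ?N) u" "u \<in> fst (st ?N)" using fe_eq[OF uv(1)] by auto
    have v: "fe v = snd (st ?N) v" "v \<in> fst (st ?N)" using fe_eq[OF uv(2)] by auto
    have "good (snd (st ?N)) (fst (st ?N))" using st_Inv unfolding Inv_def by blast
    then have "inj_on (snd (st ?N)) (fst (st ?N))" unfolding good_def by blast
    then show "u = v" using u v uv(3) by (metis inj_onD)
  qed
  show "fe ` V \<subseteq> A"
  proof
    fix x assume "x \<in> fe ` V"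
    then obtain v where v: "v \<in> V" "x = fe v" by blast
    have "fe v = snd (st (idx v)) v" "v \<in> fst (st (idx v))" using fe_eq[OF v(1)] by auto
    moreover have "good (snd (st (idx v))) (fst (st (idx v)))" using st_Inv unfolding Inv_def by blast
    ultimately show "x \<in> A" using v(2) unfolding good_def by blast
  qed
  show "A \<inter> (\<Inter>s\<in>S. nb c i (g0 s)) \<subseteq> fe ` V"
  proof
    fix b assume "b \<in> A \<inter> (\<Inter>s\<in>S. nb c i (g0 s))"
    then obtain k where k: "b = bs k" using bs by (metis rangeE)
    have "R k (st k) (st (Suc k))" by (rule st_R)
    then obtain w where w: "w \<in> fst (st (Suc k))" "b = snd (st (Suc k)) w" using k unfolding R_def by auto
    have wV: "w \<in> V" using w(1) st_Inv unfolding Inv_def by blast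
    let ?N = "max (idx w) (Suc k)"
    have "fe w = snd (st ?N) w" using fe_eq[OF wV] by simp
    moreover have "snd (st ?N) w = snd (st (Suc k)) w" using st_mono[of "Suc k" ?N] w(1) by simp
    ultimately have "b = fe w" using w(2) by simp
    then show "b \<in> fe ` V" using wV by blast
  qed
  show "\<forall>u\<in>V. \<forall>v\<in>V. E u v \<longrightarrow> edge_color c (fe u) (fe v) = i"
  proof (intro ballI impI)
    fix u v assume uv: "u \<in> V" "v \<in> V" "E u v"
    let ?N = "max (idx u) (idx v)"
    have u: "fe u = snd (st ?N) u" "u \<in> fst (st ?N)" using fe_eq[OF uv(1)] by auto
    have v: "fe v = snd (st ?N) v" "v \<in> fst (st ?N)" using fe_eq[OF uv(2)] by auto
    have "good (snd (st ?N)) (fst (st ?N))" using st_Inv unfolding Inv_def by blast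
    then show "edge_color c (fe u) (fe v) = i" using u v uv(3) unfolding good_def by simp
  qed
qed

end

lemma iii_i:
  assumes gr: "is_graph V E" and cV: "countable V" and inf: "infinite V"
    and fr: "finitely_ruled V E" and I: "nontrivial_ideal I"
  shows "ideal_plus_Ramsey V E I"
  unfolding ideal_plus_Ramsey_def
proof (intro allI impI)
  fix c :: "nat \<Rightarrow> nat \<Rightarrow> nat" assume fc: "finite_coloring c"
  obtain S where S: "finite S" "S \<subseteq> V" "\<not> (\<exists>D. finite D \<and> dominating (V - S) E D)"
    using fr unfolding finitely_ruled_def by blast
  obtain J where J: "nontrivial_ideal J" "I \<subseteq> J" "\<forall>A. A \<subseteq> Npos \<longrightarrow> A \<in> J \<or> Npos - A \<in> J"
    using max_ideal_exists[OF I] by blast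
  interpret u: uf J using J by unfold_locales auto
  obtain i A where iA: "u.pos A" "\<forall>x\<in>A. u.pos (nb c i x)" using u.color_choice[OF fc] by blast
  interpret e0: emb0 J V E c i A using gr iA by unfold_locales auto
  obtain g0 where g0: "e0.good g0 S" using e0.init_emb[OF S(1)] by blast
  define B where "B = A \<inter> (\<Inter>s\<in>S. nb c i (g0 s))"
  have "\<forall>s\<in>S. u.pos (nb c i (g0 s))" using g0 iA(2) unfolding e0.good_def by blast
  then have posB: "u.pos B" unfolding B_def by (rule u.pos_Inter[OF S(1) iA(1)])
  have Bne: "B \<noteq> {}" using u.pos_nonempty[OF posB] .
  have cB: "countable B" by simp
  have Vne: "V \<noteq> {}" using inf by auto
  define vs where "vs = from_nat_into V"
  define bs where "bs = from_nat_into B"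
  have rvs: "range vs = V" unfolding vs_def using Vne cV by simp
  have rbs: "range bs = A \<inter> (\<Inter>s\<in>S. nb c i (g0 s))" unfolding bs_def using Bne cB B_def by simp
  interpret e: emb J V E c i A S g0 vs bs
    using S g0 rvs rbs by unfold_locales auto
  have emb: "inj_on e.fe V" "e.fe ` V \<subseteq> A" "B \<subseteq> e.fe ` V"
    "\<forall>u\<in>V. \<forall>v\<in>V. E u v \<longrightarrow> edge_color c (e.fe u) (e.fe v) = i"
    using e.embedding unfolding B_def by auto
  have AN: "A \<subseteq> Npos" using iA(1) unfolding u.pos_def by simp
  have XN: "e.fe ` V \<subseteq> Npos" using emb(2) AN by blast
  have "u.pos (e.fe ` V)" using u.pos_super[OF posB emb(3) XN] .
  then have "e.fe ` V \<notin> I" using J(2) unfolding u.pos_def by blast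
  then have "e.fe ` V \<in> positive_sets I" using XN unfolding positive_sets_def by blast
  moreover have "mono_copy_on V E c (e.fe ` V)"
    unfolding mono_copy_on_def using emb(1,4) XN by blast
  ultimately show "\<exists>X. X \<in> positive_sets I \<and> mono_copy_on V E c X" by blast
qed

theorem mainTheorem16:
  fixes V :: "'a set" and E :: "'a \<Rightarrow> 'a \<Rightarrow> bool"
  assumes "is_graph V E" and "countable V" and "infinite V"
  shows "((\<forall>I. nontrivial_ideal I \<longrightarrow> ideal_plus_Ramsey V E I)
            \<longleftrightarrow> (\<exists>X. X \<in> nwd_plus \<and> mono_copy_on V E rado X))
       \<and> ((\<exists>X. X \<in> nwd_plus \<and> mono_copy_on V E rado X) \<longleftrightarrow> finitely_ruled V E)"
proof -
  have 1: "(\<forall>I. nontrivial_ideal I \<longrightarrow> ideal_plus_Ramsey V E I) \<Longrightarrow> (\<exists>X. X \<in> nwd_plus \<and> mono_copy_on V E rado X)"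
    by (rule i_ii)
  have 2: "(\<exists>X. X \<in> nwd_plus \<and> mono_copy_on V E rado X) \<Longrightarrow> finitely_ruled V E"
    using ii_iii by blast
  have 3: "finitely_ruled V E \<Longrightarrow> (\<forall>I. nontrivial_ideal I \<longrightarrow> ideal_plus_Ramsey V E I)"
    using iii_i[OF assms] by blast
  show ?thesis using 1 2 3 by blast
qed

end
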